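(* For every $j\in\mathbb Z$: (1) Every nontrivial coset of $\Phi^{j-1}_*\mathcal R$ is contained in $\{(x,y)\in\mathbb R^2: x\in m^{-j}\mathbb Z\setminus m^{-(j-1)}\mathbb Z\}$, and any two points of the same coset lie in a vertical edge path of $Y_j$ of combinatorial length at most $2$. (2) Every coset of $\mathcal R_j$ is contained in an orbit of the translation action of $m^{-j}\mathbb Z\times m_v^{-j}\mathbb Z$ on $\mathbb R^2$. (3) Let $\bar{\mathcal R}_{j+1}$ be the equivalence relation on $X_j$ generated by the pushforward $(\hat\pi^j\circ\Phi^j)_*\mathcal R$. Then the cosets of $\bar{\mathcal R}_{j+1}$ are exactly the fibers of $\pi_j:X_j\to X_{j+1}$. (4) For $i=0,1$ let $\hat\sigma_i$ be a cell of $Y_j$ and $\hat p_i$ an interior point of $\hat\sigma_i$. If $\hat p_0\sim_{\mathcal R_j}\hat p_1$, then there is a translation $t\in m^{-j}\mathbb Z\times m_v^{-j}\mathbb Z$ with $t(\hat\sigma_0)=\hat\sigma_1$ and $\hat q\sim_{\mathcal R_j}t(\hat q)$ for all $\hat q\in\hat\sigma_0$.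
   Context: Standing construction ($n=2$). Fix an integer $L\ge100$, $m=4$, $m_v=3L$. For $j\in\mathbb Z$, $Y_j$ is the cell complex on $\mathbb R^2$ given by the tiling by rectangles $[am^{-j},(a+1)m^{-j}]\times[bm_v^{-j},(b+1)m_v^{-j}]$, $a,b\in\mathbb Z$; a $1$-cell of $Y_j$ is horizontal if it is a translate of $[0,m^{-j}]\times\{0\}$ and vertical if it is a translate of $\{0\}\times[0,m_v^{-j}]$. Let $\Phi(x,y)=(m^{-1}x,m_v^{-1}y)$. For $k,\ell\in\mathbb Z$, $i\in\{1,2,3\}$, let $a_{k,\ell,i}=\{k+\tfrac i4\}\times[(3\ell+i-1)m_v^{-1},(3\ell+i)m_v^{-1}]$. $\mathcal R$ is the equivalence relation on $\mathbb R^2$ generated by $p\sim p+(0,m_v^{-1})$ for $p\in a_{k,\ell,i}$ (all $k,\ell,i$). For $j\in\mathbb Z$, $\Phi^j_*\mathcal R=\{(\Phi^jp,\Phi^jq):(p,q)\in\mathcal R\}$; $\mathcal R_j$ is the equivalence relation generated by $\Phi^i_*\mathcal R$ for all integers $i<j$, and $\mathcal R_\infty$ the one generated by all $\Phi^i_*\mathcal R$, $i\in\mathbb Z$. For $j\in\mathbb Z\cup\{\infty\}$, $X_j=\mathbb R^2/\mathcal R_j$ with the quotient topology, $\hat\pi^j:\mathbb R^2\to X_j$ the quotient map; for $i\le j$, $\pi_i^j:X_i\to X_j$ is the induced map, and $\pi_j=\pi_j^{j+1}$. *)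

theory Defs
  imports "HOL-Analysis.Analysis"
begin

text \<open>Standing construction, n = 2, m = 4, m_v = 3L. Points of the plane are real \<times> real.\<close>

definition mv :: "int \<Rightarrow> real" where
  "mv L = 3 * real_of_int L"

text \<open>Mesh sizes of Y_j: horizontal m^{-j}, vertical m_v^{-j}.\<close>
definition hx :: "int \<Rightarrow> real" where
  "hx j = (4::real) powi (- j)"

definition hy :: "int \<Rightarrow> int \<Rightarrow> real" where
  "hy L j = mv L powi (- j)"

definition Phi_pow :: "int \<Rightarrow> int \<Rightarrow> real \<times> real \<Rightarrow> real \<times> real" where
  "Phi_pow L j p = (hx j * fst p, hy L j * snd p)"

definition a_seg :: "int \<Rightarrow> int \<Rightarrow> int \<Rightarrow> int \<Rightarrow> (real \<times> real) set" where
  "a_seg L k l i = {real_of_int k + real_of_int i / 4} \<times>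
     {real_of_int (3*l + i - 1) / mv L .. real_of_int (3*l + i) / mv L}"

definition R_gen :: "int \<Rightarrow> ((real \<times> real) \<times> (real \<times> real)) set" where
  "R_gen L = {(p, p + (0, 1 / mv L)) | p. \<exists>k l i. i \<in> {1,2,3} \<and> p \<in> a_seg L k l i}"

definition eqgen :: "('a \<times> 'a) set \<Rightarrow> ('a \<times> 'a) set" where
  "eqgen S = (S \<union> S\<inverse>)\<^sup>*"

definition R_base :: "int \<Rightarrow> ((real \<times> real) \<times> (real \<times> real)) set" where
  "R_base L = eqgen (R_gen L)"

definition push :: "('a \<Rightarrow> 'b) \<Rightarrow> ('a \<times> 'a) set \<Rightarrow> ('b \<times> 'b) set" where
  "push f S = {(f p, f q) | p q. (p, q) \<in> S}"

definition R_lev :: "int \<Rightarrow> int \<Rightarrow> ((real \<times> real) \<times> (real \<times> real)) set" where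
  "R_lev L j = eqgen (\<Union>i\<in>{i. i < j}. push (Phi_pow L i) (R_base L))"

definition R_inf :: "int \<Rightarrow> ((real \<times> real) \<times> (real \<times> real)) set" where
  "R_inf L = eqgen (\<Union>i. push (Phi_pow L i) (R_base L))"

definition X :: "int \<Rightarrow> int \<Rightarrow> (real \<times> real) set set" where
  "X L j = UNIV // R_lev L j"

definition hatpi :: "int \<Rightarrow> int \<Rightarrow> real \<times> real \<Rightarrow> (real \<times> real) set" where
  "hatpi L j p = R_lev L j `` {p}"

definition pi_map :: "int \<Rightarrow> int \<Rightarrow> (real \<times> real) set \<Rightarrow> (real \<times> real) set" where
  "pi_map L j c = R_lev L (j + 1) `` c"

text \<open>Cells of Y_j: [a hx, (a+dx) hx] \<times> [b hy, (b+dy) hy] with dx, dy \<in> {0,1}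
  (vertices, horizontal/vertical edges, rectangles).\<close>
definition cell :: "int \<Rightarrow> int \<Rightarrow> int \<Rightarrow> int \<Rightarrow> int \<Rightarrow> int \<Rightarrow> (real \<times> real) set" where
  "cell L j a b dx dy =
     {real_of_int a * hx j .. real_of_int (a + dx) * hx j} \<times>
     {real_of_int b * hy L j .. real_of_int (b + dy) * hy L j}"

definition cells :: "int \<Rightarrow> int \<Rightarrow> (real \<times> real) set set" where
  "cells L j = {cell L j a b dx dy | a b dx dy. dx \<in> {0,1} \<and> dy \<in> {0,1}}"

text \<open>Vertical edge paths in Y_j, given by their vertex sequence (integer lattice
  coordinates); consecutive vertices are joined by a vertical 1-cell.
  Combinatorial length = number of edges = length vs - 1.\<close>
definition vpath :: "(int \<times> int) list \<Rightarrow> bool" where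
  "vpath vs \<longleftrightarrow> vs \<noteq> [] \<and>
     (\<forall>(u, w) \<in> set (zip vs (tl vs)). fst u = fst w \<and> \<bar>snd u - snd w\<bar> = 1)"

definition vpath_set :: "int \<Rightarrow> int \<Rightarrow> (int \<times> int) list \<Rightarrow> (real \<times> real) set" where
  "vpath_set L j vs = cell L j (fst (hd vs)) (snd (hd vs)) 0 0 \<union>
     \<Union> {cell L j (fst u) (min (snd u) (snd w)) 0 1 | u w. (u, w) \<in> set (zip vs (tl vs))}"

definition gridX :: "int \<Rightarrow> real set" where
  "gridX j = {real_of_int a * hx j | a. True}"

definition trans_lat :: "int \<Rightarrow> int \<Rightarrow> (real \<times> real) set" where
  "trans_lat L j = {(real_of_int s * hx j, real_of_int t * hy L j) | s t. True}"

end

theory Submission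
  imports Defs
begin

lemma mv_pos: "L \<ge> 100 \<Longrightarrow> mv L > 0" by (simp add: mv_def)
lemma hy_shift:
  assumes "L \<ge> 100" "i < j"
  shows "hy L i / mv L = real_of_int ((3*L)^nat(j-i-1)) * hy L j"
proof -
  have m: "mv L \<noteq> 0" using assms mv_pos by force
  have "hy L i / mv L = mv L powi (-i-1)"
    unfolding hy_def using m by (simp add: power_int_diff)
  also have "\<dots> = mv L powi ((j-i-1) + (-j))" by simp
  also have "\<dots> = mv L powi (j-i-1) * mv L powi (-j)" by (rule power_int_add) (use m in simp)
  also have "mv L powi (j-i-1) = mv L ^ nat (j-i-1)"
    using assms by (simp add: power_int_def)
  finally show ?thesis by (simp add: hy_def mv_def)
qed
lemma hx_shift:
  assumes "i < j"
  shows "hx i / 4 = real_of_int (4^nat(j-i-1)) * hx j"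
proof -
  have "hx i / 4 = (4::real) powi (-i-1)"
    unfolding hx_def by (simp add: power_int_diff)
  also have "\<dots> = (4::real) powi ((j-i-1) + (-j))" by simp
  also have "\<dots> = (4::real) powi (j-i-1) * 4 powi (-j)" by (rule power_int_add) simp
  also have "(4::real) powi (j-i-1) = 4 ^ nat (j-i-1)"
    using assms by (simp add: power_int_def)
  finally show ?thesis by (simp add: hx_def)
qed
lemma hx_pos: "hx j > 0" by (simp add: hx_def)
lemma hy_pos: "L \<ge> 100 \<Longrightarrow> hy L j > 0" by (simp add: hy_def mv_pos)
lemma hy_prev: "L \<ge> 100 \<Longrightarrow> hy L (j-1) / mv L = hy L j"
  using hy_shift[of L "j-1" j] by simp
lemma hx_prev: "hx (j-1) / 4 = hx j"
  using hx_shift[of "j-1" j] by simp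
lemma int_lt1: "real_of_int a < real_of_int b + 1 \<Longrightarrow> a \<le> b"
proof -
  assume "real_of_int a < real_of_int b + 1"
  hence "real_of_int a < real_of_int (b+1)" by simp
  hence "a < b + 1" by (simp only: of_int_less_iff)
  thus ?thesis by simp
qed

lemma eqgen_refl: "(x,x) \<in> eqgen S" by (simp add: eqgen_def)
lemma eqgen_sym: "(x,y) \<in> eqgen S \<Longrightarrow> (y,x) \<in> eqgen S"
  unfolding eqgen_def by (metis converse_Un converse_converse rtrancl_converseI sup_commute)
lemma eqgen_trans: "(x,y) \<in> eqgen S \<Longrightarrow> (y,z) \<in> eqgen S \<Longrightarrow> (x,z) \<in> eqgen S"
  unfolding eqgen_def by (rule rtrancl_trans)
lemma eqgen_base: "(x,y) \<in> S \<Longrightarrow> (x,y) \<in> eqgen S"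
  unfolding eqgen_def by auto
lemma eqgen_equiv: "equiv UNIV (eqgen S)"
proof (rule equivI)
  show "refl (eqgen S)" by (rule refl_onI) (simp_all add: eqgen_refl)
  show "sym (eqgen S)" by (rule symI) (rule eqgen_sym)
  show "trans (eqgen S)" by (rule transI) (rule eqgen_trans)
  show "eqgen S \<subseteq> UNIV \<times> UNIV" by simp
qed
lemma eqgen_sub: "S \<subseteq> eqgen T \<Longrightarrow> eqgen S \<subseteq> eqgen T"
proof
  fix p assume S: "S \<subseteq> eqgen T" and "p \<in> eqgen S"
  obtain x y where p: "p = (x,y)" by fastforce
  have "(x,y) \<in> (S \<union> S\<inverse>)\<^sup>*" using \<open>p \<in> eqgen S\<close> p by (simp add: eqgen_def)
  hence "(x,y) \<in> eqgen T"
  proof (induction rule: rtrancl_induct)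
    case base then show ?case by (rule eqgen_refl)
  next
    case (step y z)
    have "(y,z) \<in> eqgen T"
    proof (cases "(y,z) \<in> S")
      case True then show ?thesis using S by blast
    next
      case False
      hence "(z,y) \<in> S" using step(2) by blast
      hence "(z,y) \<in> eqgen T" using S by blast
      thus ?thesis by (rule eqgen_sym)
    qed
    then show ?case by (rule eqgen_trans[OF step(3)])
  qed
  thus "p \<in> eqgen T" using p by simp
qed
lemma eqgen_mono: "S \<subseteq> T \<Longrightarrow> eqgen S \<subseteq> eqgen T"
proof (rule eqgen_sub)
  assume "S \<subseteq> T"
  moreover have "T \<subseteq> eqgen T" unfolding eqgen_def by auto
  ultimately show "S \<subseteq> eqgen T" by (rule order_trans)
qed
lemma push_eqgen: "push f (eqgen S) \<subseteq> eqgen (push f S)"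
proof
  fix r assume "r \<in> push f (eqgen S)"
  then obtain p q where r: "r = (f p, f q)" and pq: "(p,q) \<in> (S \<union> S\<inverse>)\<^sup>*"
    by (auto simp: push_def eqgen_def)
  from pq have "(f p, f q) \<in> eqgen (push f S)"
  proof (induction rule: rtrancl_induct)
    case base then show ?case by (rule eqgen_refl)
  next
    case (step y z)
    have "(f y, f z) \<in> eqgen (push f S)"
    proof (cases "(y,z) \<in> S")
      case True then show ?thesis unfolding push_def by (intro eqgen_base) blast
    next
      case False
      hence "(z,y) \<in> S" using step(2) by blast
      hence "(f z, f y) \<in> eqgen (push f S)" unfolding push_def by (intro eqgen_base) blast
      thus ?thesis by (rule eqgen_sym)
    qed
    then show ?case by (rule eqgen_trans[OF step(3)])
  qed
  thus "r \<in> eqgen (push f S)" using r by simp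
qed
lemma push_mono: "S \<subseteq> T \<Longrightarrow> push f S \<subseteq> push f T" by (auto simp: push_def)
lemma sub_eqgen: "S \<subseteq> eqgen S" unfolding eqgen_def by auto
lemma R_lev_gen: "R_lev L j = eqgen (\<Union>i\<in>{i. i<j}. push (Phi_pow L i) (R_gen L))"
proof
  show "R_lev L j \<subseteq> eqgen (\<Union>i\<in>{i. i<j}. push (Phi_pow L i) (R_gen L))"
    unfolding R_lev_def R_base_def
  proof (rule eqgen_sub)
    show "(\<Union>i\<in>{i. i<j}. push (Phi_pow L i) (eqgen (R_gen L))) \<subseteq> eqgen (\<Union>i\<in>{i. i<j}. push (Phi_pow L i) (R_gen L))"
    proof (rule UN_least)
      fix i assume "i \<in> {i. i<j}"
      have "push (Phi_pow L i) (eqgen (R_gen L)) \<subseteq> eqgen (push (Phi_pow L i) (R_gen L))" by (rule push_eqgen)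
      also have "\<dots> \<subseteq> eqgen (\<Union>i\<in>{i. i<j}. push (Phi_pow L i) (R_gen L))"
        by (rule eqgen_mono) (use \<open>i \<in> _\<close> in blast)
      finally show "push (Phi_pow L i) (eqgen (R_gen L)) \<subseteq> \<dots>" .
    qed
  qed
  show "eqgen (\<Union>i\<in>{i. i<j}. push (Phi_pow L i) (R_gen L)) \<subseteq> R_lev L j"
    unfolding R_lev_def R_base_def
  proof (rule eqgen_mono, rule subsetI)
    fix x assume "x \<in> (\<Union>i\<in>{i. i<j}. push (Phi_pow L i) (R_gen L))"
    then obtain i where "i < j" "x \<in> push (Phi_pow L i) (R_gen L)" by blast
    moreover have "push (Phi_pow L i) (R_gen L) \<subseteq> push (Phi_pow L i) (eqgen (R_gen L))"
      by (rule push_mono[OF sub_eqgen])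
    ultimately show "x \<in> (\<Union>i\<in>{i. i<j}. push (Phi_pow L i) (eqgen (R_gen L)))" by blast
  qed
qed


definition Tset :: "int \<Rightarrow> int \<Rightarrow> int \<Rightarrow> int \<Rightarrow> (real \<times> real) set" where
  "Tset L k l i = {real_of_int k + real_of_int i / 4} \<times>
     {real_of_int (3*l + i - 1) / mv L .. real_of_int (3*l + i + 1) / mv L}"

lemma R_gen_E: "(p,q) \<in> R_gen L \<Longrightarrow> \<exists>k l i. i \<in> {1,2,3} \<and> p \<in> a_seg L k l i \<and> q = p + (0, 1 / mv L)"
  unfolding R_gen_def by blast

lemma x_ident:
  assumes "real_of_int k + real_of_int i / 4 = real_of_int k' + real_of_int i' / 4"
    "i \<in> {1,2,3}" "i' \<in> {1,2,3}"
  shows "k = k' \<and> i = i'"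
proof -
  have "real_of_int (4*k+i) = real_of_int (4*k'+i')" using assms(1) by simp
  hence "4*k+i = 4*k'+i'" by (simp only: of_int_eq_iff)
  moreover have "i = 1 \<or> i = 2 \<or> i = 3" "i' = 1 \<or> i' = 2 \<or> i' = 3" using assms(2,3) by auto
  ultimately show ?thesis by presburger
qed

lemma mvI: "L \<ge> 100 \<Longrightarrow> x \<in> {real_of_int a / mv L .. real_of_int b / mv L} \<longleftrightarrow>
   real_of_int a \<le> x * mv L \<and> x * mv L \<le> real_of_int b"
  using mv_pos[of L] by (simp add: pos_le_divide_eq pos_divide_le_eq)

lemma le_int: "real_of_int a \<le> real_of_int b \<Longrightarrow> a \<le> b" by simp

lemma T_step:
  assumes L: "L \<ge> 100" and i: "i \<in> {1,2,3}" and p: "p \<in> Tset L k l i"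
    and pq: "(p,q) \<in> R_gen L \<union> (R_gen L)\<inverse>"
  shows "q \<in> Tset L k l i"
proof -
  have m: "mv L > 0" using L mv_pos by blast
  have px: "fst p = real_of_int k + real_of_int i / 4" using p by (auto simp: Tset_def)
  have py: "real_of_int (3*l+i-1) \<le> snd p * mv L" "snd p * mv L \<le> real_of_int (3*l+i+1)"
    using p unfolding Tset_def mem_Times_iff mvI[OF L] by auto
  show ?thesis
  proof (cases "(p,q) \<in> R_gen L")
    case True
    then obtain k' l' i' where q: "q = p + (0, 1 / mv L)" and i': "i' \<in> {1,2,3}" and a: "p \<in> a_seg L k' l' i'"
      using R_gen_E by blast
    have "fst p = real_of_int k' + real_of_int i' / 4" using a by (auto simp: a_seg_def)
    hence "real_of_int k + real_of_int i / 4 = real_of_int k' + real_of_int i' / 4" using px by simp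
    from x_ident[OF this i i'] have ki: "k = k'" "i = i'" by auto
    have ay: "real_of_int (3*l'+i-1) \<le> snd p * mv L" "snd p * mv L \<le> real_of_int (3*l'+i)"
      using a ki unfolding a_seg_def mem_Times_iff mvI[OF L] by auto
    have "real_of_int (3*l+i-1) \<le> real_of_int (3*l'+i)" using py ay by linarith
    hence 1: "3*l+i-1 \<le> 3*l'+i" by (rule le_int)
    have "real_of_int (3*l'+i-1) \<le> real_of_int (3*l+i+1)" using py ay by linarith
    hence 2: "3*l'+i-1 \<le> 3*l+i+1" by (rule le_int)
    from 1 2 have "l' = l" by linarith
    have qy: "snd q * mv L = snd p * mv L + 1" using q m by (simp add: distrib_right)
    have "real_of_int (3*l+i-1) \<le> snd q * mv L" "snd q * mv L \<le> real_of_int (3*l+i+1)"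
      using qy py ay \<open>l' = l\<close> by auto
    moreover have "fst q = fst p" using q by simp
    ultimately show ?thesis using px unfolding Tset_def mem_Times_iff mvI[OF L] by auto
  next
    case False
    hence "(q,p) \<in> R_gen L" using pq by auto
    then obtain k' l' i' where q: "p = q + (0, 1 / mv L)" and i': "i' \<in> {1,2,3}" and a: "q \<in> a_seg L k' l' i'"
      using R_gen_E by blast
    have "fst q = real_of_int k' + real_of_int i' / 4" using a by (auto simp: a_seg_def)
    moreover have "fst q = fst p" using q by simp
    ultimately have "real_of_int k + real_of_int i / 4 = real_of_int k' + real_of_int i' / 4" using px by simp
    from x_ident[OF this i i'] have ki: "k = k'" "i = i'" by auto
    have ay: "real_of_int (3*l'+i-1) \<le> snd q * mv L" "snd q * mv L \<le> real_of_int (3*l'+i)"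
      using a ki unfolding a_seg_def mem_Times_iff mvI[OF L] by auto
    have qy: "snd p * mv L = snd q * mv L + 1" using q m by (simp add: distrib_right)
    have "real_of_int (3*l+i-1) \<le> real_of_int (3*l'+i+1)" using py ay qy by linarith
    hence 1: "3*l+i-1 \<le> 3*l'+i+1" by (rule le_int)
    have "real_of_int (3*l'+i) \<le> real_of_int (3*l+i+1)" using py ay qy by linarith
    hence 2: "3*l'+i \<le> 3*l+i+1" by (rule le_int)
    from 1 2 have "l' = l" by linarith
    have "real_of_int (3*l+i-1) \<le> snd q * mv L" "snd q * mv L \<le> real_of_int (3*l+i+1)"
      using qy py ay \<open>l' = l\<close> by auto
    moreover have "fst q = fst p" using q by simp
    ultimately show ?thesis using px unfolding Tset_def mem_Times_iff mvI[OF L] by auto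
  qed
qed

lemma T_closed:
  assumes L: "L \<ge> 100" and i: "i \<in> {1,2,3}" and p: "p \<in> Tset L k l i"
    and pq: "(p,q) \<in> R_base L"
  shows "q \<in> Tset L k l i"
  using pq[unfolded R_base_def eqgen_def]
proof (induction rule: rtrancl_induct)
  case base then show ?case using p .
next
  case (step y z) then show ?case using T_step[OF L i] by blast
qed

lemma nontriv:
  assumes L: "L \<ge> 100" and pq: "(p,q) \<in> R_base L" and ne: "q \<noteq> p"
  shows "\<exists>k l i. i \<in> {1,2,3} \<and> p \<in> Tset L k l i"
proof -
  have m: "mv L > 0" using L mv_pos by blast
  have pq': "(p,q) \<in> (R_gen L \<union> (R_gen L)\<inverse>)\<^sup>*" using pq by (simp add: R_base_def eqgen_def)
  from pq' obtain z where "(p,z) \<in> R_gen L \<union> (R_gen L)\<inverse>"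
  proof (cases rule: converse_rtranclE)
    case base then show ?thesis using ne by simp
  next
    case (step z) then show ?thesis using that by blast
  qed
  then show ?thesis
  proof
    assume "(p,z) \<in> R_gen L"
    then obtain k l i where i: "i \<in> {1,2,3}" and a: "p \<in> a_seg L k l i" using R_gen_E by blast
    have "real_of_int (3*l+i-1) \<le> snd p * mv L" "snd p * mv L \<le> real_of_int (3*l+i)" "fst p = real_of_int k + real_of_int i / 4"
      using a unfolding a_seg_def mem_Times_iff mvI[OF L] by auto
    hence "p \<in> Tset L k l i" unfolding Tset_def mem_Times_iff mvI[OF L] by auto
    thus ?thesis using i by blast
  next
    assume "(p,z) \<in> (R_gen L)\<inverse>"
    hence "(z,p) \<in> R_gen L" by simp
    then obtain k l i where i: "i \<in> {1,2,3}" and a: "z \<in> a_seg L k l i" and pz: "p = z + (0, 1/ mv L)"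
      using R_gen_E by blast
    have "real_of_int (3*l+i-1) \<le> snd z * mv L" "snd z * mv L \<le> real_of_int (3*l+i)" "fst z = real_of_int k + real_of_int i / 4"
      using a unfolding a_seg_def mem_Times_iff mvI[OF L] by auto
    moreover have "snd p * mv L = snd z * mv L + 1" "fst p = fst z" using pz m by (simp_all add: distrib_right)
    ultimately have "p \<in> Tset L k l i" unfolding Tset_def mem_Times_iff mvI[OF L] by auto
    thus ?thesis using i by blast
  qed
qed


lemma Phi_inj: "L \<ge> 100 \<Longrightarrow> Phi_pow L i p = Phi_pow L i q \<Longrightarrow> p = q"
  using hx_pos[of i] hy_pos[of L i] by (auto simp: Phi_pow_def prod_eq_iff)

lemma Phi_T:
  assumes L: "L \<ge> 100" and z: "z \<in> Phi_pow L (j-1) ` Tset L k l i"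
  shows "fst z = real_of_int (4*k+i) * hx j \<and> real_of_int (3*l+i-1) * hy L j \<le> snd z \<and>
         snd z \<le> real_of_int (3*l+i+1) * hy L j"
proof -
  obtain x y where z: "z = Phi_pow L (j-1) (x,y)" and xy: "(x,y) \<in> Tset L k l i" using z by auto
  have x: "x = real_of_int k + real_of_int i / 4" and y: "real_of_int (3*l+i-1) \<le> y * mv L" "y * mv L \<le> real_of_int (3*l+i+1)"
    using xy unfolding Tset_def mem_Times_iff mvI[OF L] by auto
  have hx4: "hx (j-1) = 4 * hx j" using hx_prev[of j] by simp
  have hym: "hy L (j-1) = mv L * hy L j" using hy_prev[OF L, of j] mv_pos[OF L] by (simp add: field_simps)
  have "fst z = hx (j-1) * x" using z by (simp add: Phi_pow_def)
  also have "\<dots> = hx j * (4 * x)" using hx4 by simp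
  also have "4 * x = real_of_int (4*k+i)" using x by simp
  finally have 1: "fst z = real_of_int (4*k+i) * hx j" by simp
  have sz: "snd z = hy L j * (y * mv L)" using z hym by (simp add: Phi_pow_def)
  have hp: "hy L j > 0" using hy_pos[OF L] .
  have "hy L j * real_of_int (3*l+i-1) \<le> hy L j * (y * mv L)" using y(1) hp by (intro mult_left_mono) auto
  moreover have "hy L j * (y * mv L) \<le> hy L j * real_of_int (3*l+i+1)" using y(2) hp by (intro mult_left_mono) auto
  ultimately show ?thesis using 1 sz by (simp add: mult.commute)
qed

lemma part1:
  assumes L: "L \<ge> 100"
    and ex: "\<exists>q \<in> push (Phi_pow L (j - 1)) (R_base L) `` {P}. q \<noteq> P"
  shows "push (Phi_pow L (j - 1)) (R_base L) `` {P} \<subseteq> {z. fst z \<in> gridX j - gridX (j - 1)} \<and>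
         (\<forall>u \<in> push (Phi_pow L (j - 1)) (R_base L) `` {P}.
          \<forall>w \<in> push (Phi_pow L (j - 1)) (R_base L) `` {P}.
            \<exists>vs. vpath vs \<and> length vs - 1 \<le> 2 \<and> u \<in> vpath_set L j vs \<and> w \<in> vpath_set L j vs)"
proof -
  let ?C = "push (Phi_pow L (j - 1)) (R_base L) `` {P}"
  from ex obtain q0 where q0: "(P, q0) \<in> push (Phi_pow L (j - 1)) (R_base L)" and q0P: "q0 \<noteq> P" by blast
  from q0 obtain p q where P: "P = Phi_pow L (j-1) p" and pq: "(p,q) \<in> R_base L"
      and q0d: "q0 = Phi_pow L (j-1) q"
    unfolding push_def by blast
  have ne: "Phi_pow L (j-1) q \<noteq> P" using q0P q0d by simp
  have "q \<noteq> p" using ne P by auto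
  then obtain k l i where i: "i \<in> {1,2,3}" and pT: "p \<in> Tset L k l i" using nontriv[OF L pq] by blast
  have sub: "?C \<subseteq> Phi_pow L (j-1) ` Tset L k l i"
  proof
    fix u assume "u \<in> ?C"
    hence "(P, u) \<in> push (Phi_pow L (j - 1)) (R_base L)" by blast
    then obtain p2 u' where "P = Phi_pow L (j-1) p2" "u = Phi_pow L (j-1) u'" "(p2,u') \<in> R_base L"
      unfolding push_def by blast
    moreover have "p2 = p" by (rule Phi_inj[OF L, of "j-1"]) (use calculation(1) P in simp)
    ultimately show "u \<in> Phi_pow L (j-1) ` Tset L k l i" using T_closed[OF L i pT] by blast
  qed
  define A where "A = 4*k+i"
  define B where "B = 3*l+i-1"
  have propz: "fst z = real_of_int A * hx j \<and> real_of_int B * hy L j \<le> snd z \<and> snd z \<le> real_of_int (B+2) * hy L j"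
    if "z \<in> ?C" for z
    using Phi_T[OF L, of z j k l i] sub that by (auto simp: A_def B_def algebra_simps)
  have g1: "fst z \<in> gridX j - gridX (j-1)" if "z \<in> ?C" for z
  proof -
    have f: "fst z = real_of_int A * hx j" using propz that by blast
    have "fst z \<notin> gridX (j-1)"
    proof
      assume "fst z \<in> gridX (j-1)"
      then obtain a where "fst z = real_of_int a * hx (j-1)" by (auto simp: gridX_def)
      hence "real_of_int A * hx j = real_of_int a * (4 * hx j)" using f hx_prev[of j] by simp
      hence "real_of_int A = real_of_int (4*a)" using hx_pos[of j] by simp
      hence "A = 4*a" by (simp only: of_int_eq_iff)
      moreover have "i = 1 \<or> i = 2 \<or> i = 3" using i by auto
      ultimately show False unfolding A_def by presburger
    qed
    thus ?thesis using f by (auto simp: gridX_def)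
  qed
  define vs where "vs = [(A,B),(A,B+1),(A,B+2)]"
  have vp: "vpath vs" by (simp add: vpath_def vs_def)
  have len: "length vs - 1 \<le> 2" by (simp add: vs_def)
  have c1: "cell L j A B 0 1 \<subseteq> vpath_set L j vs"
  proof -
    have "cell L j A B 0 1 \<in> {cell L j (fst u) (min (snd u) (snd w)) 0 1 | u w. (u, w) \<in> set (zip vs (tl vs))}"
      by (rule CollectI, rule exI[of _ "(A,B)"], rule exI[of _ "(A,B+1)"]) (simp add: vs_def)
    thus ?thesis unfolding vpath_set_def by blast
  qed
  have c2: "cell L j A (B+1) 0 1 \<subseteq> vpath_set L j vs"
  proof -
    have "cell L j A (B+1) 0 1 \<in> {cell L j (fst u) (min (snd u) (snd w)) 0 1 | u w. (u, w) \<in> set (zip vs (tl vs))}"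
      by (rule CollectI, rule exI[of _ "(A,B+1)"], rule exI[of _ "(A,B+2)"]) (simp add: vs_def)
    thus ?thesis unfolding vpath_set_def by blast
  qed
  have inv: "z \<in> vpath_set L j vs" if "z \<in> ?C" for z
  proof (cases "snd z \<le> real_of_int (B+1) * hy L j")
    case True
    hence "z \<in> cell L j A B 0 1" using propz[OF that] by (auto simp: cell_def mem_Times_iff)
    thus ?thesis using c1 by blast
  next
    case False
    hence "z \<in> cell L j A (B+1) 0 1" using propz[OF that] by (auto simp: cell_def mem_Times_iff algebra_simps)
    thus ?thesis using c2 by blast
  qed
  show ?thesis using g1 inv vp len by blast
qed


definition H :: "int \<Rightarrow> int \<Rightarrow> ((real \<times> real) \<times> (real \<times> real)) set" where
  "H L j = (\<Union>i\<in>{i. i<j}. push (Phi_pow L i) (R_gen L))"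

lemma R_lev_H: "R_lev L j = (H L j \<union> (H L j)\<inverse>)\<^sup>*"
  unfolding R_lev_gen H_def eqgen_def ..

lemma Phi_add: "Phi_pow L i (u + (0, 1 / mv L)) = Phi_pow L i u + (0, hy L i / mv L)"
  by (simp add: Phi_pow_def distrib_left)

lemma H_step:
  assumes L: "L \<ge> 100" and yz: "(y,z) \<in> H L j"
  shows "\<exists>i u k l i'. i < j \<and> i' \<in> {1,2,3} \<and> u \<in> a_seg L k l i' \<and> y = Phi_pow L i u \<and>
     z = y + (0, real_of_int ((3*L)^nat(j-i-1)) * hy L j)"
proof -
  from yz obtain i where i: "i < j" and "(y,z) \<in> push (Phi_pow L i) (R_gen L)"
    unfolding H_def by blast
  then obtain p q where y: "y = Phi_pow L i p" and z0: "z = Phi_pow L i q" and pq: "(p,q) \<in> R_gen L"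
    unfolding push_def by blast
  then obtain k l i' where i': "i' \<in> {1,2,3}" and pa: "p \<in> a_seg L k l i'" and qd: "q = p + (0, 1/mv L)"
    using R_gen_E by blast
  have z: "z = Phi_pow L i (p + (0, 1/mv L))" using z0 qd by simp
  have "hy L i / mv L = real_of_int ((3*L)^nat(j-i-1)) * hy L j" by (rule hy_shift[OF L i])
  hence "z = y + (0, real_of_int ((3*L)^nat(j-i-1)) * hy L j)" using y z Phi_add[of L i p] by simp
  thus ?thesis using i i' pa y by blast
qed

lemma part2:
  assumes L: "L \<ge> 100"
  shows "R_lev L j `` {p} \<subseteq> (\<lambda>t. p + t) ` trans_lat L j"
proof
  fix q assume "q \<in> R_lev L j `` {p}"
  hence "(p,q) \<in> (H L j \<union> (H L j)\<inverse>)\<^sup>*" by (simp add: R_lev_H)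
  hence "\<exists>s t. q = p + (real_of_int s * hx j, real_of_int t * hy L j)"
  proof (induction rule: rtrancl_induct)
    case base show ?case by (rule exI[of _ 0], rule exI[of _ 0]) (simp add: zero_prod_def)
  next
    case (step y z)
    from step(3) obtain s t where y: "y = p + (real_of_int s * hx j, real_of_int t * hy L j)" by blast
    from step(2) show ?case
    proof
      assume "(y,z) \<in> H L j"
      then obtain N where "z = y + (0, real_of_int N * hy L j)" using H_step[OF L] by blast
      hence "z = p + (real_of_int s * hx j, real_of_int (t+N) * hy L j)" using y by (simp add: algebra_simps)
      thus ?case by blast
    next
      assume "(y,z) \<in> (H L j)\<inverse>"
      then obtain N where "y = z + (0, real_of_int N * hy L j)" using H_step[OF L] by blast
      hence "z = p + (real_of_int s * hx j, real_of_int (t-N) * hy L j)" using y by (simp add: algebra_simps prod_eq_iff)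
      thus ?case by blast
    qed
  qed
  thus "q \<in> (\<lambda>t. p + t) ` trans_lat L j" by (auto simp: trans_lat_def)
qed


lemma R_lev_equiv: "equiv UNIV (R_lev L j)"
  unfolding R_lev_def by (rule eqgen_equiv)

lemma hatpi_eq: "hatpi L j x = hatpi L j y \<longleftrightarrow> (x,y) \<in> R_lev L j"
  unfolding hatpi_def using equiv_class_eq_iff[OF R_lev_equiv] by blast

lemma X_range: "X L j = range (hatpi L j)"
  by (auto simp: X_def hatpi_def quotient_def)

lemma R_lev_mono: "R_lev L j \<subseteq> R_lev L (j+1)"
  unfolding R_lev_def
proof (rule eqgen_mono, rule subsetI)
  fix x assume "x \<in> (\<Union>i\<in>{i. i<j}. push (Phi_pow L i) (R_base L))"
  then obtain i where "i<j" "x \<in> push (Phi_pow L i) (R_base L)" by blast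
  thus "x \<in> (\<Union>i\<in>{i. i<j+1}. push (Phi_pow L i) (R_base L))" by (intro UN_I[of i]) auto
qed

lemma G_sub: "(u,v) \<in> R_base L \<Longrightarrow> (Phi_pow L j u, Phi_pow L j v) \<in> R_lev L (j+1)"
  unfolding R_lev_def
proof (rule eqgen_base, rule UN_I[of j])
  assume "(u,v) \<in> R_base L"
  thus "(Phi_pow L j u, Phi_pow L j v) \<in> push (Phi_pow L j) (R_base L)" unfolding push_def by blast
qed simp

lemma R_lev_trans: "(x,y) \<in> R_lev L j \<Longrightarrow> (y,z) \<in> R_lev L j \<Longrightarrow> (x,z) \<in> R_lev L j"
  unfolding R_lev_def by (rule eqgen_trans)
lemma R_lev_sym: "(x,y) \<in> R_lev L j \<Longrightarrow> (y,x) \<in> R_lev L j"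
  unfolding R_lev_def by (rule eqgen_sym)
lemma R_lev_refl: "(x,x) \<in> R_lev L j"
  unfolding R_lev_def by (rule eqgen_refl)

lemma pi_hat: "pi_map L j (hatpi L j p) = hatpi L (j+1) p"
proof
  show "pi_map L j (hatpi L j p) \<subseteq> hatpi L (j+1) p"
  proof
    fix x assume "x \<in> pi_map L j (hatpi L j p)"
    then obtain y where y1: "(p,y) \<in> R_lev L j" and y2: "(y,x) \<in> R_lev L (j+1)"
      unfolding pi_map_def hatpi_def by blast
    have "(p,y) \<in> R_lev L (j+1)" using y1 R_lev_mono by blast
    hence "(p,x) \<in> R_lev L (j+1)" by (rule R_lev_trans) (rule y2)
    thus "x \<in> hatpi L (j+1) p" unfolding hatpi_def by blast
  qed
  show "hatpi L (j+1) p \<subseteq> pi_map L j (hatpi L j p)"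
    unfolding pi_map_def hatpi_def using R_lev_refl by blast
qed

lemma part3:
  assumes L: "L \<ge> 100"
  shows "(let Rb = eqgen {(hatpi L j (Phi_pow L j p), hatpi L j (Phi_pow L j q)) | p q. (p, q) \<in> R_base L}
       in {Rb `` {c} | c. c \<in> X L j} = {{c \<in> X L j. pi_map L j c = z} | z. z \<in> X L (j + 1)})"
proof -
  define G where "G = {(hatpi L j (Phi_pow L j p), hatpi L j (Phi_pow L j q)) | p q. (p, q) \<in> R_base L}"
  define Rb where "Rb = eqgen G"
  have fw: "\<exists>p'. d = hatpi L j p' \<and> (p,p') \<in> R_lev L (j+1)" if "(hatpi L j p, d) \<in> Rb" for p d
    using that[unfolded Rb_def eqgen_def]
  proof (induction rule: rtrancl_induct)
    case base then show ?case using R_lev_refl by blast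
  next
    case (step y z)
    from step(3) obtain p' where y: "y = hatpi L j p'" and pp: "(p,p') \<in> R_lev L (j+1)" by blast
    from step(2) obtain u v where uv: "(u,v) \<in> R_base L" and
      c: "(y = hatpi L j (Phi_pow L j u) \<and> z = hatpi L j (Phi_pow L j v)) \<or>
          (z = hatpi L j (Phi_pow L j u) \<and> y = hatpi L j (Phi_pow L j v))"
      unfolding G_def by blast
    show ?case using c
    proof
      assume a: "y = hatpi L j (Phi_pow L j u) \<and> z = hatpi L j (Phi_pow L j v)"
      hence "(p', Phi_pow L j u) \<in> R_lev L (j+1)" using y hatpi_eq R_lev_mono by blast
      hence "(p, Phi_pow L j u) \<in> R_lev L (j+1)" by (rule R_lev_trans[OF pp])
      hence "(p, Phi_pow L j v) \<in> R_lev L (j+1)" by (rule R_lev_trans) (rule G_sub[OF uv])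
      thus ?case using a by blast
    next
      assume a: "z = hatpi L j (Phi_pow L j u) \<and> y = hatpi L j (Phi_pow L j v)"
      hence "(p', Phi_pow L j v) \<in> R_lev L (j+1)" using y hatpi_eq R_lev_mono by blast
      hence "(p, Phi_pow L j v) \<in> R_lev L (j+1)" by (rule R_lev_trans[OF pp])
      hence "(p, Phi_pow L j u) \<in> R_lev L (j+1)" by (rule R_lev_trans) (rule R_lev_sym[OF G_sub[OF uv]])
      thus ?case using a by blast
    qed
  qed
  have bw: "(hatpi L j p, hatpi L j p') \<in> Rb" if "(p,p') \<in> R_lev L (j+1)" for p p'
  proof -
    have "(p,p') \<in> ((\<Union>i\<in>{i. i<j+1}. push (Phi_pow L i) (R_base L)) \<union> (\<Union>i\<in>{i. i<j+1}. push (Phi_pow L i) (R_base L))\<inverse>)\<^sup>*"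
      using that by (simp add: R_lev_def eqgen_def)
    thus ?thesis
    proof (induction rule: rtrancl_induct)
      case base then show ?case unfolding Rb_def by (rule eqgen_refl)
    next
      case (step y z)
      have one: "(hatpi L j y, hatpi L j z) \<in> Rb" if "(y,z) \<in> push (Phi_pow L i) (R_base L)" "i < j+1" for y z i
      proof (cases "i < j")
        case True
        hence "(y,z) \<in> R_lev L j" using that(1) unfolding R_lev_def by (intro eqgen_base) auto
        hence "hatpi L j y = hatpi L j z" using hatpi_eq by blast
        thus ?thesis unfolding Rb_def by (simp add: eqgen_refl)
      next
        case False
        hence "i = j" using that(2) by simp
        thus ?thesis using that(1) unfolding Rb_def G_def push_def by (auto intro!: eqgen_base)
      qed
      have "(hatpi L j y, hatpi L j z) \<in> Rb"
      proof (cases "(y,z) \<in> (\<Union>i\<in>{i. i<j+1}. push (Phi_pow L i) (R_base L))")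
        case True then show ?thesis using one by blast
      next
        case False
        hence "(z,y) \<in> (\<Union>i\<in>{i. i<j+1}. push (Phi_pow L i) (R_base L))" using step(2) by blast
        hence "(hatpi L j z, hatpi L j y) \<in> Rb" using one by blast
        thus ?thesis unfolding Rb_def by (rule eqgen_sym)
      qed
      then show ?case unfolding Rb_def by (rule eqgen_trans[OF step(3)[unfolded Rb_def]])
    qed
  qed
  have fib: "Rb `` {hatpi L j p} = {c \<in> X L j. pi_map L j c = hatpi L (j+1) p}" for p
  proof
    show "Rb `` {hatpi L j p} \<subseteq> {c \<in> X L j. pi_map L j c = hatpi L (j+1) p}"
    proof
      fix d assume "d \<in> Rb `` {hatpi L j p}"
      then obtain p' where d: "d = hatpi L j p'" and pp: "(p,p') \<in> R_lev L (j+1)" using fw by blast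
      have "(p',p) \<in> R_lev L (j+1)" by (rule R_lev_sym[OF pp])
      hence "hatpi L (j+1) p' = hatpi L (j+1) p" by (simp only: hatpi_eq)
      hence "pi_map L j d = hatpi L (j+1) p" using d pi_hat by simp
      thus "d \<in> {c \<in> X L j. pi_map L j c = hatpi L (j+1) p}" using d X_range by auto
    qed
    show "{c \<in> X L j. pi_map L j c = hatpi L (j+1) p} \<subseteq> Rb `` {hatpi L j p}"
    proof
      fix d assume "d \<in> {c \<in> X L j. pi_map L j c = hatpi L (j+1) p}"
      then obtain p' where d: "d = hatpi L j p'" and e: "pi_map L j d = hatpi L (j+1) p" using X_range by auto
      have "hatpi L (j+1) p' = hatpi L (j+1) p" using e d pi_hat by simp
      hence "(p',p) \<in> R_lev L (j+1)" by (simp only: hatpi_eq)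
      hence "(p,p') \<in> R_lev L (j+1)" by (rule R_lev_sym)
      thus "d \<in> Rb `` {hatpi L j p}" using bw d by blast
    qed
  qed
  have "{Rb `` {c} | c. c \<in> X L j} = {{c \<in> X L j. pi_map L j c = z} | z. z \<in> X L (j + 1)}"
  proof (intro equalityI subsetI)
    fix s assume "s \<in> {Rb `` {c} | c. c \<in> X L j}"
    then obtain p where "s = Rb `` {hatpi L j p}" using X_range by auto
    thus "s \<in> {{c \<in> X L j. pi_map L j c = z} | z. z \<in> X L (j + 1)}" using fib X_range by auto
  next
    fix s assume "s \<in> {{c \<in> X L j. pi_map L j c = z} | z. z \<in> X L (j + 1)}"
    then obtain p where "s = {c \<in> X L j. pi_map L j c = hatpi L (j+1) p}" using X_range by auto
    hence "s = Rb `` {hatpi L j p}" using fib by simp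
    thus "s \<in> {Rb `` {c} | c. c \<in> X L j}" using X_range by auto
  qed
  thus ?thesis unfolding Rb_def G_def Let_def .
qed


definition RIint :: "int \<Rightarrow> int \<Rightarrow> real \<Rightarrow> real set" where
  "RIint a dx h = (if dx = 0 then {real_of_int a * h} else {real_of_int a * h <..< real_of_int (a+1) * h})"

lemma int_RI:
  assumes "h > 0" "dx \<in> {0,1}"
  shows "rel_interior {real_of_int a * h .. real_of_int (a+dx) * h} = RIint a dx h"
proof (cases "dx = 0")
  case True then show ?thesis by (simp add: RIint_def)
next
  case False
  hence "dx = 1" using assms by auto
  moreover have "real_of_int a * h < real_of_int (a+1) * h" using assms by (simp add: distrib_right)
  ultimately show ?thesis by (simp add: RIint_def)
qed

lemma cell_RI:
  assumes L: "L \<ge> 100" and "dx \<in> {0,1}" "dy \<in> {0,1}"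
  shows "rel_interior (cell L j a b dx dy) = RIint a dx (hx j) \<times> RIint b dy (hy L j)"
proof -
  have "rel_interior (cell L j a b dx dy) =
     rel_interior {real_of_int a * hx j .. real_of_int (a+dx) * hx j} \<times>
     rel_interior {real_of_int b * hy L j .. real_of_int (b+dy) * hy L j}"
    unfolding cell_def by (intro rel_interior_Times convex_real_interval)
  also have "\<dots> = RIint a dx (hx j) \<times> RIint b dy (hy L j)"
    by (simp only: int_RI[OF hx_pos assms(2)] int_RI[OF hy_pos[OF L] assms(3)])
  finally show ?thesis .
qed

lemma ih_less: "h > 0 \<Longrightarrow> real_of_int a * h < real_of_int b * h \<Longrightarrow> a < b"
  by simp
lemma ih_le: "h > 0 \<Longrightarrow> real_of_int a * h \<le> real_of_int b * h \<Longrightarrow> a \<le> b"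
  by simp
lemma ih_eq: "h > 0 \<Longrightarrow> real_of_int a * h = real_of_int b * h \<Longrightarrow> a = b"
  by simp

lemma RIint_uniq:
  assumes h: "h > 0" and "dx \<in> {0,1}" "dx' \<in> {0,1}" and x: "x \<in> RIint a dx h" "x \<in> RIint a' dx' h"
  shows "a = a' \<and> dx = dx'"
proof -
  consider "dx = 0" "dx' = 0" | "dx = 0" "dx' = 1" | "dx = 1" "dx' = 0" | "dx = 1" "dx' = 1" using assms by auto
  then show ?thesis
  proof cases
    case 1 then show ?thesis using x ih_eq[OF h] by (auto simp: RIint_def)
  next
    case 2
    hence "real_of_int a' * h < real_of_int a * h" "real_of_int a * h < real_of_int (a'+1) * h"
      using x by (auto simp: RIint_def)
    hence "a' < a" "a < a'+1" using ih_less[OF h] by blast+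
    then show ?thesis by simp
  next
    case 3
    hence "real_of_int a * h < real_of_int a' * h" "real_of_int a' * h < real_of_int (a+1) * h"
      using x by (auto simp: RIint_def)
    hence "a < a'" "a' < a+1" using ih_less[OF h] by blast+
    then show ?thesis by simp
  next
    case 4
    hence "real_of_int a * h < x" "x < real_of_int (a+1) * h" "real_of_int a' * h < x" "x < real_of_int (a'+1) * h"
      using x by (auto simp: RIint_def)
    hence "real_of_int a * h < real_of_int (a'+1) * h" "real_of_int a' * h < real_of_int (a+1) * h" by linarith+
    hence "a < a'+1" "a' < a+1" using ih_less[OF h] by blast+
    then show ?thesis using 4 by simp
  qed
qed

lemma RIint_shift: "x \<in> RIint a dx h \<Longrightarrow> x + real_of_int n * h \<in> RIint (a+n) dx h"
  by (auto simp: RIint_def algebra_simps)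

lemma cell_shift_iff:
  "q + (real_of_int n * hx j, real_of_int m * hy L j) \<in> cell L j (a+n) (b+m) dx dy \<longleftrightarrow> q \<in> cell L j a b dx dy"
  by (simp add: cell_def mem_Times_iff algebra_simps)

lemma cell_image:
  "(\<lambda>q. (real_of_int n * hx j, real_of_int m * hy L j) + q) ` cell L j a b dx dy = cell L j (a+n) (b+m) dx dy"
proof (intro equalityI subsetI)
  fix x assume "x \<in> (\<lambda>q. (real_of_int n * hx j, real_of_int m * hy L j) + q) ` cell L j a b dx dy"
  then obtain q where q: "q \<in> cell L j a b dx dy" and x: "x = (real_of_int n * hx j, real_of_int m * hy L j) + q" by blast
  have "q + (real_of_int n * hx j, real_of_int m * hy L j) \<in> cell L j (a+n) (b+m) dx dy"
    unfolding cell_shift_iff by (rule q)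
  thus "x \<in> cell L j (a+n) (b+m) dx dy" using x by (simp add: add.commute)
next
  fix x assume x: "x \<in> cell L j (a+n) (b+m) dx dy"
  let ?t = "(real_of_int n * hx j, real_of_int m * hy L j)"
  have "(x - ?t) + ?t \<in> cell L j (a+n) (b+m) dx dy" using x by simp
  hence "x - ?t \<in> cell L j a b dx dy" unfolding cell_shift_iff .
  moreover have "x = ?t + (x - ?t)" by simp
  ultimately show "x \<in> (\<lambda>q. ?t + q) ` cell L j a b dx dy" by blast
qed

lemma RI_shift:
  assumes L: "L \<ge> 100" and d: "dx \<in> {0,1}" "dy \<in> {0,1}" and y: "y \<in> rel_interior (cell L j a b dx dy)"
  shows "y + (real_of_int n * hx j, real_of_int m * hy L j) \<in> rel_interior (cell L j (a+n) (b+m) dx dy)"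
  using y unfolding cell_RI[OF L d] by (auto simp: mem_Times_iff RIint_shift)

lemma cell_in_vseg:
  assumes L: "L \<ge> 100" and d: "dx \<in> {0,1}" "dy \<in> {0,1}" and y: "y \<in> rel_interior (cell L j a b dx dy)"
    and fy: "fst y = real_of_int A * hx j"
    and sy: "real_of_int C * hy L j \<le> snd y" "snd y \<le> real_of_int D * hy L j"
    and q: "q \<in> cell L j a b dx dy"
  shows "fst q = real_of_int A * hx j \<and> real_of_int C * hy L j \<le> snd q \<and> snd q \<le> real_of_int D * hy L j"
proof -
  have hxp: "hx j > 0" by (rule hx_pos)
  have hyp: "hy L j > 0" by (rule hy_pos[OF L])
  have yi: "fst y \<in> RIint a dx (hx j)" "snd y \<in> RIint b dy (hy L j)" using y unfolding cell_RI[OF L d] mem_Times_iff by auto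
  have qi: "fst q \<in> {real_of_int a * hx j .. real_of_int (a+dx) * hx j}" "snd q \<in> {real_of_int b * hy L j .. real_of_int (b+dy) * hy L j}"
    using q unfolding cell_def mem_Times_iff by auto
  have "dx = 0"
  proof (rule ccontr)
    assume "dx \<noteq> 0"
    hence "real_of_int a * hx j < real_of_int A * hx j" "real_of_int A * hx j < real_of_int (a+1) * hx j"
      using yi fy by (auto simp: RIint_def)
    hence "a < A" "A < a+1" using ih_less[OF hxp] by blast+
    thus False by simp
  qed
  hence fq: "fst q = real_of_int A * hx j" using yi qi fy by (auto simp: RIint_def)
  have "real_of_int C * hy L j \<le> snd q \<and> snd q \<le> real_of_int D * hy L j"
  proof (cases "dy = 0")
    case True
    then show ?thesis using yi qi sy by (auto simp: RIint_def)
  next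
    case False
    hence dy: "dy = 1" using d by auto
    hence "real_of_int b * hy L j < snd y" "snd y < real_of_int (b+1) * hy L j" using yi by (auto simp: RIint_def)
    hence "real_of_int C * hy L j < real_of_int (b+1) * hy L j" "real_of_int b * hy L j < real_of_int D * hy L j"
      using sy by linarith+
    hence "C < b+1" "b < D" using ih_less[OF hyp] by blast+
    hence "C \<le> b" "b + 1 \<le> D" by simp_all
    hence "real_of_int C * hy L j \<le> real_of_int b * hy L j" "real_of_int (b+1) * hy L j \<le> real_of_int D * hy L j"
      using hyp by simp_all
    then show ?thesis using qi dy by auto
  qed
  with fq show ?thesis by blast
qed


lemma segH:
  assumes L: "L \<ge> 100" and i: "i < j" and i': "i' \<in> {1,2,3}"
    and K: "K = real_of_int ((3*L)^nat(j-i-1)) * hy L j"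
    and fq: "fst q = hx i * (real_of_int k + real_of_int i' / 4)"
    and sq: "real_of_int (3*l+i'-1) * K \<le> snd q" "snd q \<le> real_of_int (3*l+i') * K"
  shows "(q, q + (0, K)) \<in> H L j"
proof -
  have hyi: "hy L i = mv L * K" using hy_shift[OF L i] K mv_pos[OF L] by (simp add: field_simps)
  have Kp: "K > 0" using hyi hy_pos[OF L, of i] mv_pos[OF L] by (simp add: zero_less_mult_iff)
  define u where "u = (real_of_int k + real_of_int i' / 4, snd q / hy L i)"
  have e: "snd u * mv L = snd q / K" using hyi mv_pos[OF L] Kp by (simp add: u_def field_simps)
  have "real_of_int (3*l+i'-1) \<le> snd u * mv L" "snd u * mv L \<le> real_of_int (3*l+i')"
    unfolding e using sq Kp by (simp_all add: pos_le_divide_eq pos_divide_le_eq)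
  hence ua: "u \<in> a_seg L k l i'" unfolding a_seg_def mem_Times_iff mvI[OF L] by (simp add: u_def)
  have pu: "Phi_pow L i u = q" using fq hy_pos[OF L, of i] by (simp add: Phi_pow_def u_def prod_eq_iff)
  have pu2: "Phi_pow L i (u + (0, 1 / mv L)) = q + (0, K)"
    using Phi_add[of L i u] pu hyi mv_pos[OF L] by simp
  have "(u, u + (0, 1/mv L)) \<in> R_gen L" using ua i' unfolding R_gen_def by blast
  hence "(Phi_pow L i u, Phi_pow L i (u + (0, 1 / mv L))) \<in> push (Phi_pow L i) (R_gen L)"
    unfolding push_def by blast
  thus ?thesis using pu pu2 i unfolding H_def by auto
qed

lemma step4:
  assumes L: "L \<ge> 100" and d: "dx \<in> {0,1}" "dy \<in> {0,1}" and y: "y \<in> rel_interior (cell L j a b dx dy)"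
    and yz: "(y,z) \<in> H L j \<union> (H L j)\<inverse>"
  shows "\<exists>m. z = y + (0, real_of_int m * hy L j) \<and>
           (\<forall>q\<in>cell L j a b dx dy. (q, q + (0, real_of_int m * hy L j)) \<in> R_lev L j)"
proof -
  have key: "\<exists>i k l i'. i < j \<and> i' \<in> {1,2,3} \<and> fst y = hx i * (real_of_int k + real_of_int i' / 4) \<and>
     fst y = real_of_int ((4*k+i') * 4^nat(j-i-1)) * hx j \<and>
     real_of_int (3*l+i'-1) * (real_of_int ((3*L)^nat(j-i-1)) * hy L j) \<le> snd w \<and>
     snd w \<le> real_of_int (3*l+i') * (real_of_int ((3*L)^nat(j-i-1)) * hy L j) \<and>
     z' = w + (0, real_of_int ((3*L)^nat(j-i-1)) * hy L j) \<and> fst w = fst y"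
    if wz: "(w, z') \<in> H L j" and wy: "fst w = fst y" for w z'
  proof -
    obtain i u k l i' where i: "i < j" and i': "i' \<in> {1,2,3}" and ua: "u \<in> a_seg L k l i'"
      and w: "w = Phi_pow L i u" and z': "z' = w + (0, real_of_int ((3*L)^nat(j-i-1)) * hy L j)"
      using H_step[OF L wz] by blast
    define K where "K = real_of_int ((3*L)^nat(j-i-1)) * hy L j"
    have hyi: "hy L i = mv L * K" using hy_shift[OF L i] K_def mv_pos[OF L] by (simp add: field_simps)
    have Kp: "K > 0" using hyi hy_pos[OF L, of i] mv_pos[OF L] by (simp add: zero_less_mult_iff)
    have fu: "fst u = real_of_int k + real_of_int i' / 4" and
      su: "real_of_int (3*l+i'-1) \<le> snd u * mv L" "snd u * mv L \<le> real_of_int (3*l+i')"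
      using ua unfolding a_seg_def mem_Times_iff mvI[OF L] by auto
    have fw: "fst w = hx i * (real_of_int k + real_of_int i' / 4)" using w fu by (simp add: Phi_pow_def)
    have "hx i * (real_of_int k + real_of_int i' / 4) = (hx i / 4) * real_of_int (4*k+i')" by (simp add: field_simps)
    also have "\<dots> = real_of_int ((4*k+i') * 4^nat(j-i-1)) * hx j" using hx_shift[OF i] by simp
    finally have fw2: "fst w = real_of_int ((4*k+i') * 4^nat(j-i-1)) * hx j" using fw by simp
    have sw: "snd w = (snd u * mv L) * K" using w hyi by (simp add: Phi_pow_def)
    have ineq: "real_of_int (3*l+i'-1) * K \<le> snd w" "snd w \<le> real_of_int (3*l+i') * K"
      unfolding sw using su Kp by (simp_all add: mult_right_mono)
    have fy1: "fst y = hx i * (real_of_int k + real_of_int i' / 4)" using fw wy by simp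
    have fy2: "fst y = real_of_int ((4*k+i') * 4^nat(j-i-1)) * hx j" using fw2 wy by simp
    show ?thesis
      apply (rule exI[of _ i], rule exI[of _ k], rule exI[of _ l], rule exI[of _ i'])
      using i i' fy1 fy2 ineq(1) ineq(2) z' wy unfolding K_def by blast
  qed
  from yz show ?thesis
  proof
    assume "(y,z) \<in> H L j"
    then obtain i k l i' where i: "i < j" and i': "i' \<in> {1,2,3}" and fy: "fst y = hx i * (real_of_int k + real_of_int i' / 4)"
      and fy2: "fst y = real_of_int ((4*k+i') * 4^nat(j-i-1)) * hx j"
      and sy: "real_of_int (3*l+i'-1) * (real_of_int ((3*L)^nat(j-i-1)) * hy L j) \<le> snd y"
              "snd y \<le> real_of_int (3*l+i') * (real_of_int ((3*L)^nat(j-i-1)) * hy L j)"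
      and z: "z = y + (0, real_of_int ((3*L)^nat(j-i-1)) * hy L j)"
      using key by blast
    define N where "N = (3*L)^nat(j-i-1)"
    have sy2: "real_of_int ((3*l+i'-1)*N) * hy L j \<le> snd y" "snd y \<le> real_of_int ((3*l+i')*N) * hy L j"
      using sy by (simp_all add: N_def mult.assoc)
    have "(q, q + (0, real_of_int N * hy L j)) \<in> R_lev L j" if q: "q \<in> cell L j a b dx dy" for q
    proof -
      have cq: "fst q = real_of_int ((4*k+i') * 4^nat(j-i-1)) * hx j \<and> real_of_int ((3*l+i'-1)*N) * hy L j \<le> snd q
               \<and> snd q \<le> real_of_int ((3*l+i')*N) * hy L j"
        by (rule cell_in_vseg[OF L d y fy2 sy2 q])
      have "(q, q + (0, real_of_int N * hy L j)) \<in> H L j"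
        by (rule segH[OF L i i' _ _, of _ _ k l]) (use cq fy fy2 in \<open>simp_all add: N_def mult.assoc\<close>)
      thus ?thesis unfolding R_lev_H by blast
    qed
    thus ?thesis using z N_def by blast
  next
    assume "(y,z) \<in> (H L j)\<inverse>"
    hence zy: "(z,y) \<in> H L j" by simp
    obtain fz where fz: "fst z = fst y" using zy H_step[OF L zy] by fastforce
    obtain i k l i' where i: "i < j" and i': "i' \<in> {1,2,3}" and fy: "fst y = hx i * (real_of_int k + real_of_int i' / 4)"
      and fy2: "fst y = real_of_int ((4*k+i') * 4^nat(j-i-1)) * hx j"
      and sz: "real_of_int (3*l+i'-1) * (real_of_int ((3*L)^nat(j-i-1)) * hy L j) \<le> snd z"
              "snd z \<le> real_of_int (3*l+i') * (real_of_int ((3*L)^nat(j-i-1)) * hy L j)"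
      and yy: "y = z + (0, real_of_int ((3*L)^nat(j-i-1)) * hy L j)"
      using key[OF zy fz] by blast
    define N where "N = (3*L)^nat(j-i-1)"
    have sy2: "real_of_int ((3*l+i'-1+1)*N) * hy L j \<le> snd y" "snd y \<le> real_of_int ((3*l+i'+1)*N) * hy L j"
      using sz yy by (simp_all add: N_def algebra_simps)
    have "(q, q + (0, real_of_int (-N) * hy L j)) \<in> R_lev L j" if q: "q \<in> cell L j a b dx dy" for q
    proof -
      have cq: "fst q = real_of_int ((4*k+i') * 4^nat(j-i-1)) * hx j \<and> real_of_int ((3*l+i'-1+1)*N) * hy L j \<le> snd q
               \<and> snd q \<le> real_of_int ((3*l+i'+1)*N) * hy L j"
        by (rule cell_in_vseg[OF L d y fy2 sy2 q])
      define q' where "q' = q + (0, real_of_int (-N) * hy L j)"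
      have "(q', q' + (0, real_of_int N * hy L j)) \<in> H L j"
        by (rule segH[OF L i i' _ _, of _ _ k l]) (use cq fy fy2 in \<open>simp_all add: N_def q'_def algebra_simps\<close>)
      moreover have "q' + (0, real_of_int N * hy L j) = q" by (simp add: q'_def prod_eq_iff)
      ultimately have "(q', q) \<in> H L j" by simp
      thus ?thesis unfolding R_lev_H q'_def[symmetric] by blast
    qed
    moreover have "z = y + (0, real_of_int (-N) * hy L j)" using yy N_def by (simp add: prod_eq_iff)
    ultimately show ?thesis by blast
  qed
qed


lemma part4:
  assumes L: "L \<ge> 100" and s0: "\<sigma>0 \<in> cells L j" and s1: "\<sigma>1 \<in> cells L j"
    and p0: "p0 \<in> rel_interior \<sigma>0" and p1: "p1 \<in> rel_interior \<sigma>1" and pp: "(p0, p1) \<in> R_lev L j"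
  shows "\<exists>t \<in> trans_lat L j. (\<lambda>q. t + q) ` \<sigma>0 = \<sigma>1 \<and> (\<forall>q \<in> \<sigma>0. (q, t + q) \<in> R_lev L j)"
proof -
  obtain a0 b0 dx dy where s0d: "\<sigma>0 = cell L j a0 b0 dx dy" and d: "dx \<in> {0,1}" "dy \<in> {0,1}"
    using s0 by (auto simp: cells_def)
  obtain a1 b1 dx1 dy1 where s1d: "\<sigma>1 = cell L j a1 b1 dx1 dy1" and d1: "dx1 \<in> {0,1}" "dy1 \<in> {0,1}"
    using s1 by (auto simp: cells_def)
  have "(p0,p1) \<in> (H L j \<union> (H L j)\<inverse>)\<^sup>*" using pp by (simp add: R_lev_H)
  hence "\<exists>n m. p1 \<in> rel_interior (cell L j (a0+n) (b0+m) dx dy) \<and>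
          (\<forall>q\<in>\<sigma>0. (q, q + (real_of_int n * hx j, real_of_int m * hy L j)) \<in> R_lev L j)"
  proof (induction rule: rtrancl_induct)
    case base
    show ?case by (rule exI[of _ 0], rule exI[of _ 0]) (use p0 s0d R_lev_refl in \<open>simp add: zero_prod_def[symmetric]\<close>)
  next
    case (step y z)
    from step(3) obtain n m where y: "y \<in> rel_interior (cell L j (a0+n) (b0+m) dx dy)"
      and r: "\<forall>q\<in>\<sigma>0. (q, q + (real_of_int n * hx j, real_of_int m * hy L j)) \<in> R_lev L j" by blast
    obtain m' where z: "z = y + (0, real_of_int m' * hy L j)"
      and r': "\<forall>q\<in>cell L j (a0+n) (b0+m) dx dy. (q, q + (0, real_of_int m' * hy L j)) \<in> R_lev L j"
      using step4[OF L d y step(2)] by blast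
    have "y + (real_of_int 0 * hx j, real_of_int m' * hy L j) \<in> rel_interior (cell L j (a0+n+0) (b0+m+m') dx dy)"
      by (rule RI_shift[OF L d y])
    hence zi: "z \<in> rel_interior (cell L j (a0+n) (b0+(m+m')) dx dy)" using z by (simp add: add.assoc)
    have "(q, q + (real_of_int n * hx j, real_of_int (m+m') * hy L j)) \<in> R_lev L j" if q: "q \<in> \<sigma>0" for q
    proof -
      let ?t = "(real_of_int n * hx j, real_of_int m * hy L j)"
      have "q + ?t \<in> cell L j (a0+n) (b0+m) dx dy" using q s0d cell_shift_iff by blast
      hence "(q + ?t, q + ?t + (0, real_of_int m' * hy L j)) \<in> R_lev L j" using r' by blast
      moreover have "q + ?t + (0, real_of_int m' * hy L j) = q + (real_of_int n * hx j, real_of_int (m+m') * hy L j)"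
        by (simp add: algebra_simps)
      ultimately show ?thesis using R_lev_trans[OF bspec[OF r q]] by simp
    qed
    thus ?case using zi by blast
  qed
  then obtain n m where p1i: "p1 \<in> rel_interior (cell L j (a0+n) (b0+m) dx dy)"
    and r: "\<forall>q\<in>\<sigma>0. (q, q + (real_of_int n * hx j, real_of_int m * hy L j)) \<in> R_lev L j" by blast
  have A: "fst p1 \<in> RIint (a0+n) dx (hx j)" "snd p1 \<in> RIint (b0+m) dy (hy L j)"
    using p1i unfolding cell_RI[OF L d] mem_Times_iff by auto
  have B: "fst p1 \<in> RIint a1 dx1 (hx j)" "snd p1 \<in> RIint b1 dy1 (hy L j)"
    using p1 unfolding s1d cell_RI[OF L d1] mem_Times_iff by auto
  have e1: "a0+n = a1 \<and> dx = dx1" using RIint_uniq[OF hx_pos d(1) d1(1) A(1) B(1)] .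
  have e2: "b0+m = b1 \<and> dy = dy1" using RIint_uniq[OF hy_pos[OF L] d(2) d1(2) A(2) B(2)] .
  let ?t = "(real_of_int n * hx j, real_of_int m * hy L j)"
  have "?t \<in> trans_lat L j" by (auto simp: trans_lat_def)
  moreover have "(\<lambda>q. ?t + q) ` \<sigma>0 = \<sigma>1" unfolding s0d s1d cell_image using e1 e2 by simp
  moreover have "\<forall>q \<in> \<sigma>0. (q, ?t + q) \<in> R_lev L j" using r by (simp add: add.commute)
  ultimately show ?thesis by blast
qed

theorem mainTheorem2:
  fixes L j :: int
  assumes "L \<ge> 100"
  shows
   "(\<forall>p. (\<exists>q \<in> push (Phi_pow L (j - 1)) (R_base L) `` {p}. q \<noteq> p) \<longrightarrow>
        (push (Phi_pow L (j - 1)) (R_base L) `` {p} \<subseteq> {z. fst z \<in> gridX j - gridX (j - 1)} \<and>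
         (\<forall>u \<in> push (Phi_pow L (j - 1)) (R_base L) `` {p}.
          \<forall>w \<in> push (Phi_pow L (j - 1)) (R_base L) `` {p}.
            \<exists>vs. vpath vs \<and> length vs - 1 \<le> 2 \<and> u \<in> vpath_set L j vs \<and> w \<in> vpath_set L j vs)))
    \<and> (\<forall>p. \<exists>p'. R_lev L j `` {p} \<subseteq> (\<lambda>t. p' + t) ` trans_lat L j)
    \<and> (let Rb = eqgen {(hatpi L j (Phi_pow L j p), hatpi L j (Phi_pow L j q)) | p q. (p, q) \<in> R_base L}
       in {Rb `` {c} | c. c \<in> X L j} = {{c \<in> X L j. pi_map L j c = z} | z. z \<in> X L (j + 1)})
    \<and> (\<forall>\<sigma>0 \<sigma>1 p0 p1. \<sigma>0 \<in> cells L j \<longrightarrow> \<sigma>1 \<in> cells L j \<longrightarrow>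
          p0 \<in> rel_interior \<sigma>0 \<longrightarrow> p1 \<in> rel_interior \<sigma>1 \<longrightarrow> (p0, p1) \<in> R_lev L j \<longrightarrow>
          (\<exists>t \<in> trans_lat L j. (\<lambda>q. t + q) ` \<sigma>0 = \<sigma>1 \<and> (\<forall>q \<in> \<sigma>0. (q, t + q) \<in> R_lev L j)))"
  using part1[OF assms] part2[OF assms] part3[OF assms] part4[OF assms] by blast

end
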